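(* Fix $0<\eta<1$ and constants $A_\eta,a_\eta>0$. Let $D\ge 2$, let $0<\delta\le D$, let $\kappa\in\mathbb{Z}_{\ge0}$, and put $\xi_0=\frac{2\kappa+1}{4\delta}$. Let $\Phi\in C^\infty(\mathbb{R})$ be supported in $[-D/2,D/2]$ with $\|\Phi\|_{L^2(\mathbb{R})}=1$, and assume that for all $\xi\in\mathbb{R}$ $$ |\hat\Phi(\xi)|\le \delta^{1/2}A_\eta\Big(\exp\big(-a_\eta(\delta|\xi-\xi_0|)^{1-\eta}\big)+\exp\big(-a_\eta(\delta|\xi+\xi_0|)^{1-\eta}\big)\Big). $$ Then for every $n\in\mathbb{N}$ there exist positive constants $C_n,d_n,s_n$, depending only on $n,\eta,A_\eta,a_\eta$ (and not on $D,\delta,\kappa,\Phi$), such that for all $\xi$ with $|\xi|>\xi_0$, $$ |\hat\Phi^{(n)}(\xi)|\le C_nD^{d_n}\Big(\exp\big(-s_n(\delta|\xi-\xi_0|)^{1-\eta}\big)+\exp\big(-s_n(\delta|\xi+\xi_0|)^{1-\eta}\big)\Big). $$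
   Context: The Fourier transform is $\hat \Phi(\xi)=\int_{\mathbb{R}} \Phi(x)e^{-2\pi i x\xi}\,dx$, and $\hat\Phi^{(n)}$ denotes its $n$-th derivative. *)

theory Defs
  imports "HOL-Analysis.Analysis"
begin

fun vderiv_iter :: "nat \<Rightarrow> (real \<Rightarrow> 'a::real_normed_vector) \<Rightarrow> real \<Rightarrow> 'a" where
  "vderiv_iter 0 f = f"
| "vderiv_iter (Suc n) f = (\<lambda>x. vector_derivative (vderiv_iter n f) (at x))"

definition smooth_real :: "(real \<Rightarrow> 'a::real_normed_vector) \<Rightarrow> bool" where
  "smooth_real f \<longleftrightarrow>
     (\<forall>n x. (vderiv_iter n f has_vector_derivative vderiv_iter (Suc n) f x) (at x))"

definition fourier :: "(real \<Rightarrow> complex) \<Rightarrow> real \<Rightarrow> complex" where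
  "fourier \<Phi> \<xi> = (LINT x|lborel. \<Phi> x * cis (- 2 * pi * x * \<xi>))"

end

theory Submission
  imports Defs
begin


lemma cis_vderiv:
  "((\<lambda>\<xi>. cis (-2*pi*x*\<xi>)) has_vector_derivative ((-2*pi*\<i> * of_real x) * cis(-2*pi*x*\<xi>))) (at \<xi> within U)"
proof -
  have "((\<lambda>\<xi>. -2*pi*x*\<xi>) has_derivative (\<lambda>t. t * (-2*pi*x))) (at \<xi> within U)"
    by (auto intro!: derivative_eq_intros)
  from has_derivative_cis[OF this] show ?thesis
    unfolding has_vector_derivative_def
    by (rule has_derivative_eq_rhs) (auto simp: fun_eq_iff scaleR_conv_of_real algebra_simps)
qed

definition FT :: "(real \<Rightarrow> complex) \<Rightarrow> real \<Rightarrow> nat \<Rightarrow> real \<Rightarrow> complex" where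
 "FT \<Phi> L k \<xi> = integral {-L..L} (\<lambda>x. (-2*pi*\<i> * of_real x)^k * \<Phi> x * cis (-2*pi*x*\<xi>))"

lemma FT_deriv:
  assumes "continuous_on UNIV \<Phi>"
  shows "(FT \<Phi> L k has_vector_derivative FT \<Phi> L (Suc k) \<xi>) (at \<xi>)"
proof -
  have "((\<lambda>\<xi>. integral (cbox (-L) L) (\<lambda>x. (-2*pi*\<i> * of_real x)^k * \<Phi> x * cis (-2*pi*x*\<xi>))) has_vector_derivative
     integral (cbox (-L) L) (\<lambda>x. (-2*pi*\<i> * of_real x)^k * \<Phi> x * ((-2*pi*\<i> * of_real x) * cis(-2*pi*x*\<xi>)))) (at \<xi> within UNIV)"
    apply (rule leibniz_rule_vector_derivative)
        apply (rule has_vector_derivative_mult_right, rule cis_vderiv)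
       apply (rule integrable_continuous)
       apply (intro continuous_intros continuous_on_subset[OF assms]; simp)
    apply (simp add: split_beta)
      apply (intro continuous_intros continuous_on_compose2[OF assms]; simp)
     apply auto
    done
  then show ?thesis unfolding FT_def cbox_interval
    by (simp add: algebra_simps)
qed

lemma vderiv_FT:
  assumes "continuous_on UNIV \<Phi>"
  shows "vderiv_iter n (FT \<Phi> L 0) = FT \<Phi> L n"
proof (induction n)
  case (Suc n)
  show ?case using vector_derivative_at[OF FT_deriv[OF assms]] by (simp add: Suc fun_eq_iff)
qed simp

lemma smooth_cont:
  assumes "smooth_real \<Phi>" shows "continuous_on UNIV \<Phi>"
proof -
  have "\<And>x. (\<Phi> has_vector_derivative vderiv_iter (Suc 0) \<Phi> x) (at x)"
    using assms unfolding smooth_real_def by (metis vderiv_iter.simps(1))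
  then show ?thesis
    by (intro continuous_at_imp_continuous_on) (auto intro: has_vector_derivative_continuous)
qed

lemma lint_restrict:
  fixes f :: "real \<Rightarrow> 'b::euclidean_space"
  assumes "continuous_on UNIV f" "\<And>x. \<bar>x\<bar> > L \<Longrightarrow> f x = 0"
  shows "(LINT x|lborel. f x) = integral {-L..L} f"
proof -
  have "(LINT x|lborel. f x) = (LINT x|lborel. indicator {-L..L} x *\<^sub>R f x)"
    by (rule Bochner_Integration.integral_cong) (auto simp: indicator_def assms(2))
  also have "\<dots> = (LINT x:{-L..L}|lborel. f x)" by (simp add: set_lebesgue_integral_def)
  also have "\<dots> = integral {-L..L} f"
    apply (rule set_borel_integral_eq_integral(2))
    unfolding set_integrable_def
    by (rule borel_integrable_compact) (auto intro: continuous_on_subset[OF assms(1)])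
  finally show ?thesis .
qed

lemma fourier_FT:
  assumes "continuous_on UNIV \<Phi>" "\<And>x. \<bar>x\<bar> > L \<Longrightarrow> \<Phi> x = 0"
  shows "fourier \<Phi> \<xi> = FT \<Phi> L 0 \<xi>"
  unfolding fourier_def FT_def
  by (subst lint_restrict[where L=L]) (auto intro!: continuous_intros continuous_on_compose2[OF assms(1)] simp: assms(2))

lemma FT_bound:
  assumes "continuous_on UNIV \<Phi>" "\<And>x. \<bar>x\<bar> > L \<Longrightarrow> \<Phi> x = 0" "(LINT x|lborel. (cmod (\<Phi> x))\<^sup>2) = 1"
    "L \<ge> 0"
  shows "norm (FT \<Phi> L k \<xi>) \<le> (2*pi*L)^k * ((2*L + 1)/2)"
proof -
  have cf: "continuous_on {-L..L} \<Phi>" using assms(1) continuous_on_subset by blast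
  have I2: "integral {-L..L} (\<lambda>x. (cmod (\<Phi> x))\<^sup>2) = 1"
  proof -
    have "continuous_on UNIV (\<lambda>x. (cmod (\<Phi> x))\<^sup>2)"
      by (intro continuous_intros assms(1))
    then show ?thesis
      using assms(3) lint_restrict[of "\<lambda>x. (cmod (\<Phi> x))\<^sup>2" L] assms(2) by auto
  qed
  have "norm (FT \<Phi> L k \<xi>) \<le> integral {-L..L} (\<lambda>x. (2*pi*L)^k * ((1 + (cmod (\<Phi> x))\<^sup>2)/2))"
    unfolding FT_def
  proof (rule integral_norm_bound_integral)
    show "(\<lambda>x. (-2*pi*\<i> * of_real x)^k * \<Phi> x * cis (-2*pi*x*\<xi>)) integrable_on {-L..L}"
      by (rule integrable_continuous_interval) (intro continuous_intros cf)
    show "(\<lambda>x. (2*pi*L)^k * ((1 + (cmod (\<Phi> x))\<^sup>2)/2)) integrable_on {-L..L}"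
      by (rule integrable_continuous_interval) (intro continuous_intros cf, simp)
    fix x assume x: "x \<in> {-L..L}"
    have "norm ((-2*pi*\<i> * of_real x)^k * \<Phi> x * cis (-2*pi*x*\<xi>)) = (2*pi*\<bar>x\<bar>)^k * cmod (\<Phi> x)"
      by (simp add: norm_mult norm_power)
    also have "\<dots> \<le> (2*pi*L)^k * ((1 + (cmod (\<Phi> x))\<^sup>2)/2)"
    proof (rule mult_mono)
      show "(2*pi*\<bar>x\<bar>)^k \<le> (2*pi*L)^k" using x by (intro power_mono) auto
      show "cmod (\<Phi> x) \<le> (1 + (cmod (\<Phi> x))\<^sup>2)/2"
      proof -
        have "0 \<le> (cmod (\<Phi> x) - 1)\<^sup>2" by simp
        then show ?thesis by (simp add: power2_diff field_simps)
      qed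
      show "0 \<le> cmod (\<Phi> x)" by simp
      show "0 \<le> (2*pi*L)^k" using assms(4) by simp
    qed
    finally show "norm ((-2*pi*\<i> * of_real x)^k * \<Phi> x * cis (-2*pi*x*\<xi>)) \<le> (2*pi*L)^k * ((1 + (cmod (\<Phi> x))\<^sup>2)/2)" .
  qed
  also have "\<dots> = (2*pi*L)^k * ((2*L + 1)/2)"
  proof -
    have "integral {-L..L} (\<lambda>x. (2*pi*L)^k * ((1 + (cmod (\<Phi> x))\<^sup>2)/2))
      = (2*pi*L)^k / 2 * (integral {-L..L} (\<lambda>x. 1) + integral {-L..L} (\<lambda>x. (cmod (\<Phi> x))\<^sup>2))"
      apply (simp add: add_divide_distrib)
      apply (subst integral_add)
      apply (auto intro!: integrable_continuous_interval continuous_intros cf simp: algebra_simps)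
      done
    then show ?thesis using I2 assms(4) by simp
  qed
  finally show ?thesis .
qed

lemma taylor_bound:
  fixes g g1 g2 :: "real \<Rightarrow> 'a::real_normed_vector"
  assumes d1: "\<And>x. (g has_vector_derivative g1 x) (at x)"
    and d2: "\<And>x. (g1 has_vector_derivative g2 x) (at x)"
    and M: "\<And>x. norm (g2 x) \<le> M"
  shows "norm (g b - g a - (b - a) *\<^sub>R g1 a) \<le> 3 * M * (b - a)\<^sup>2"
proof -
  have lip: "norm (g1 x - g1 a) \<le> 3 * M * \<bar>x - a\<bar>" for x
  proof -
    have "norm (g1 x - g1 a - (x - a) *\<^sub>R g2 a) \<le> norm (x - a) * (2 * M)"
    proof (rule vector_differentiable_bound_linearization[where S=UNIV])
      fix y show "norm (g2 y - g2 a) \<le> 2 * M"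
        by (rule order_trans[OF norm_triangle_ineq4]) (use M[of y] M[of a] in linarith)
    qed (auto simp: d2)
    moreover have "norm ((x - a) *\<^sub>R g2 a) \<le> \<bar>x - a\<bar> * M"
      using M[of a] by (simp add: mult_left_mono)
    moreover have "norm (g1 x - g1 a) \<le> norm (g1 x - g1 a - (x - a) *\<^sub>R g2 a) + norm ((x - a) *\<^sub>R g2 a)"
      using norm_triangle_ineq[of "g1 x - g1 a - (x - a) *\<^sub>R g2 a" "(x - a) *\<^sub>R g2 a"] by simp
    ultimately show ?thesis by (simp add: real_norm_def algebra_simps)
  qed
  have "norm (g b - g a - (b - a) *\<^sub>R g1 a) \<le> norm (b - a) * (3 * M * \<bar>b - a\<bar>)"
  proof (rule vector_differentiable_bound_linearization[where S="closed_segment a b"])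
    fix x assume x: "x \<in> closed_segment a b"
    then have "\<bar>x - a\<bar> \<le> \<bar>b - a\<bar>" by (auto simp: closed_segment_eq_real_ivl split: if_splits)
    moreover have "0 \<le> M" using M[of a] norm_ge_zero order_trans by blast
    ultimately show "norm (g1 x - g1 a) \<le> 3 * M * \<bar>b - a\<bar>"
      using lip[of x] mult_left_mono[of "\<bar>x - a\<bar>" "\<bar>b - a\<bar>" "3 * M"] by simp
  qed (auto intro: has_vector_derivative_at_within d1)
  also have "norm (b - a) * (3 * M * \<bar>b - a\<bar>) = 3 * M * \<bar>b - a\<bar>\<^sup>2"
    by (simp add: power2_eq_square)
  finally show ?thesis by (simp only: power2_abs)
qed

definition E :: "real \<Rightarrow> real \<Rightarrow> real \<Rightarrow> real \<Rightarrow> real \<Rightarrow> real" where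
 "E \<eta> s \<delta> z \<xi> = exp (- s * (\<delta> * \<bar>\<xi> - z\<bar>) powr (1 - \<eta>)) + exp (- s * (\<delta> * \<bar>\<xi> + z\<bar>) powr (1 - \<eta>))"

lemma E_pos: "E \<eta> s \<delta> z \<xi> > 0" by (simp add: E_def add_pos_pos)

lemma exp_term_mono:
  fixes \<eta> s \<delta> u v :: real
  assumes "\<eta> < 1" "s \<ge> 0" "\<delta> > 0" "\<bar>u\<bar> \<le> \<bar>v\<bar>"
  shows "exp (- s * (\<delta> * \<bar>v\<bar>) powr (1 - \<eta>)) \<le> exp (- s * (\<delta> * \<bar>u\<bar>) powr (1 - \<eta>))"
proof -
  have "(\<delta> * \<bar>u\<bar>) powr (1 - \<eta>) \<le> (\<delta> * \<bar>v\<bar>) powr (1 - \<eta>)"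
    using powr_mono2[of "1-\<eta>" "\<delta>*\<bar>u\<bar>" "\<delta>*\<bar>v\<bar>"] assms by (simp add: mult_left_mono)
  then show ?thesis using assms by (simp add: mult_left_mono)
qed

lemma E_mono:
  assumes "\<eta> < 1" "s \<ge> 0" "\<delta> > 0" "z \<ge> 0" "(z < \<xi> \<and> \<xi> \<le> b) \<or> (b \<le> \<xi> \<and> \<xi> < -z)"
  shows "E \<eta> s \<delta> z b \<le> E \<eta> s \<delta> z \<xi>"
  unfolding E_def
  by (intro add_mono exp_term_mono) (use assms in auto)

lemma sqrt_exp: "sqrt (exp u) = exp (u / 2)"
proof -
  have "exp u = (exp (u/2))\<^sup>2" by (simp add: power2_eq_square exp_add[symmetric])
  then show ?thesis by simp
qed

lemma E_sqrt: "sqrt (E \<eta> s \<delta> z \<xi>) \<le> E \<eta> (s/2) \<delta> z \<xi>"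
proof -
  have "sqrt (E \<eta> s \<delta> z \<xi>) \<le> sqrt (exp (- s * (\<delta> * \<bar>\<xi> - z\<bar>) powr (1 - \<eta>))) + sqrt (exp (- s * (\<delta> * \<bar>\<xi> + z\<bar>) powr (1 - \<eta>)))"
    unfolding E_def by (rule sqrt_add_le_add_sqrt) (auto intro: add_nonneg_nonneg) 
  then show ?thesis by (simp add: sqrt_exp E_def)
qed

definition Z :: "real \<Rightarrow> nat \<Rightarrow> real" where
  "Z \<delta> \<kappa> = (2 * real \<kappa> + 1) / (4 * \<delta>)"

definition Hyp :: "real \<Rightarrow> real \<Rightarrow> real \<Rightarrow> real \<Rightarrow> real \<Rightarrow> nat \<Rightarrow> (real \<Rightarrow> complex) \<Rightarrow> bool" where
  "Hyp \<eta> A a D \<delta> \<kappa> \<Phi> \<longleftrightarrow> D \<ge> 2 \<and> 0 < \<delta> \<and> \<delta> \<le> D \<and> smooth_real \<Phi> \<and>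
     (\<forall>x. \<bar>x\<bar> > D / 2 \<longrightarrow> \<Phi> x = 0) \<and> (LINT x|lborel. (cmod (\<Phi> x))\<^sup>2) = 1 \<and>
     (\<forall>\<xi>. cmod (fourier \<Phi> \<xi>) \<le> sqrt \<delta> * A * E \<eta> a \<delta> (Z \<delta> \<kappa>) \<xi>)"

lemma Hyp_unif:
  assumes "Hyp \<eta> A a D \<delta> \<kappa> \<Phi>"
  shows "norm (FT \<Phi> (D/2) k \<xi>) \<le> 4^k * D powr (real k + 1)"
proof -
  have D: "D \<ge> 2" using assms by (simp add: Hyp_def)
  have "norm (FT \<Phi> (D/2) k \<xi>) \<le> (2*pi*(D/2))^k * ((2*(D/2) + 1)/2)"
    using assms by (intro FT_bound smooth_cont) (auto simp: Hyp_def)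
  also have "\<dots> \<le> (4*D)^k * D"
  proof (rule mult_mono)
    show "(2*pi*(D/2))^k \<le> (4*D)^k" using D pi_less_4 by (intro power_mono) auto
  qed (use D in auto)
  also have "\<dots> = 4^k * D powr (real k + 1)"
    using D by (simp add: powr_add powr_realpow power_mult_distrib)
  finally show ?thesis .
qed

lemma main:
  fixes \<eta> A a :: real
  assumes "0 < \<eta>" "\<eta> < 1" "A > 0" "a > 0"
  shows "\<exists>C d s. C > 0 \<and> d > 0 \<and> s > 0 \<and> (\<forall>D \<delta> \<kappa> \<Phi>. Hyp \<eta> A a D \<delta> \<kappa> \<Phi> \<longrightarrow>
    (\<forall>\<xi>. \<bar>\<xi>\<bar> > Z \<delta> \<kappa> \<longrightarrow> norm (FT \<Phi> (D/2) n \<xi>) \<le> C * D powr d * E \<eta> s \<delta> (Z \<delta> \<kappa>) \<xi>))"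
proof (induction n)
  case 0
  show ?case
  proof (intro exI conjI allI impI)
    fix D \<delta> \<kappa> \<Phi> \<xi> assume H: "Hyp \<eta> A a D \<delta> \<kappa> \<Phi>"
    then have "FT \<Phi> (D/2) 0 \<xi> = fourier \<Phi> \<xi>"
      by (intro fourier_FT[symmetric] smooth_cont) (auto simp: Hyp_def)
    moreover have "cmod (fourier \<Phi> \<xi>) \<le> sqrt \<delta> * A * E \<eta> a \<delta> (Z \<delta> \<kappa>) \<xi>"
      using H by (simp add: Hyp_def)
    moreover have "sqrt \<delta> \<le> D powr (1/2)"
      using H by (auto simp: Hyp_def powr_half_sqrt)
    ultimately show "norm (FT \<Phi> (D/2) 0 \<xi>) \<le> A * D powr (1/2) * E \<eta> a \<delta> (Z \<delta> \<kappa>) \<xi>"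
      using assms E_pos[of \<eta> a \<delta> "Z \<delta> \<kappa>" \<xi>]
      by (smt (verit, best) mult_right_mono mult_le_cancel_right_pos mult.commute mult.assoc norm_ge_zero)
  qed (use assms in auto)
next
  case (Suc n)
  then obtain C d s where Cds: "C > 0" "d > 0" "s > 0"
    and IH: "\<And>D \<delta> \<kappa> \<Phi> \<xi>. Hyp \<eta> A a D \<delta> \<kappa> \<Phi> \<Longrightarrow> \<bar>\<xi>\<bar> > Z \<delta> \<kappa> \<Longrightarrow>
       norm (FT \<Phi> (D/2) n \<xi>) \<le> C * D powr d * E \<eta> s \<delta> (Z \<delta> \<kappa>) \<xi>"
    by blast
  define C' where "C' = 2 * C + 3 * 4^(n+2)"
  define d' where "d' = max d (real n + 3)"
  show ?case
  proof (intro exI conjI allI impI)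
    show "C' > 0" "d' > 0" "s/2 > 0" using Cds by (auto simp: C'_def d'_def intro!: add_pos_pos)
    fix D \<delta> \<kappa> \<Phi> \<xi> assume H: "Hyp \<eta> A a D \<delta> \<kappa> \<Phi>" and \<xi>: "\<bar>\<xi>\<bar> > Z \<delta> \<kappa>"
    have D: "D \<ge> 2" and \<delta>: "\<delta> > 0" and sm: "smooth_real \<Phi>" using H by (auto simp: Hyp_def)
    have cont: "continuous_on UNIV \<Phi>" using sm by (rule smooth_cont)
    have Z0: "Z \<delta> \<kappa> \<ge> 0" using \<delta> by (simp add: Z_def)
    define M where "M = 4^(n+2) * D powr (real (n+2) + 1)"
    define e where "e = E \<eta> s \<delta> (Z \<delta> \<kappa>) \<xi>"
    define h where "h = sqrt e"
    have e0: "e > 0" unfolding e_def by (rule E_pos)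
    have h0: "h > 0" using e0 by (simp add: h_def)
    have hh: "h\<^sup>2 = e" using e0 by (simp add: h_def)
    define b where "b = (if \<xi> > 0 then \<xi> + h else \<xi> - h)"
    have bh: "(b - \<xi>)\<^sup>2 = e" "\<bar>b - \<xi>\<bar> = h" using hh h0 by (auto simp: b_def)
    have side: "(Z \<delta> \<kappa> < \<xi> \<and> \<xi> \<le> b) \<or> (b \<le> \<xi> \<and> \<xi> < - Z \<delta> \<kappa>)"
      using \<xi> h0 Z0 by (auto simp: b_def)
    have b: "\<bar>b\<bar> > Z \<delta> \<kappa>" using side by auto
    have Eb: "E \<eta> s \<delta> (Z \<delta> \<kappa>) b \<le> e"
      unfolding e_def by (rule E_mono) (use assms Cds \<delta> Z0 side in auto)
    have tay: "norm (FT \<Phi> (D/2) n b - FT \<Phi> (D/2) n \<xi> - (b - \<xi>) *\<^sub>R FT \<Phi> (D/2) (Suc n) \<xi>) \<le> 3 * M * (b - \<xi>)\<^sup>2"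
      by (rule taylor_bound[of _ _ "FT \<Phi> (D/2) (Suc (Suc n))"])
         (rule FT_deriv[OF cont], rule FT_deriv[OF cont],
          use Hyp_unif[OF H, of "Suc (Suc n)"] in \<open>simp add: M_def\<close>)
    have CD: "C * D powr d > 0" using Cds D by simp
    have n1: "norm (FT \<Phi> (D/2) n b) \<le> C * D powr d * e"
      using IH[OF H b] Eb CD by (smt (verit) mult_left_mono)
    have n2: "norm (FT \<Phi> (D/2) n \<xi>) \<le> C * D powr d * e"
      using IH[OF H \<xi>] by (simp add: e_def)
    have "h * norm (FT \<Phi> (D/2) (Suc n) \<xi>) = norm ((b - \<xi>) *\<^sub>R FT \<Phi> (D/2) (Suc n) \<xi>)"
      using bh by simp
    also have "\<dots> \<le> norm (FT \<Phi> (D/2) n b) + norm (FT \<Phi> (D/2) n \<xi>)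
        + norm (FT \<Phi> (D/2) n b - FT \<Phi> (D/2) n \<xi> - (b - \<xi>) *\<^sub>R FT \<Phi> (D/2) (Suc n) \<xi>)"
      by (smt (verit) norm_triangle_ineq4 norm_triangle_ineq norm_minus_commute diff_add_cancel)
    also have "\<dots> \<le> (2 * C * D powr d + 3 * M) * e"
      using n1 n2 tay bh by (simp add: algebra_simps)
    also have "\<dots> = h * ((2 * C * D powr d + 3 * M) * h)"
      unfolding hh[symmetric] by (simp add: power2_eq_square ac_simps)
    finally have "norm (FT \<Phi> (D/2) (Suc n) \<xi>) \<le> (2 * C * D powr d + 3 * M) * h"
      using h0 by simp
    also have "\<dots> \<le> (2 * C * D powr d + 3 * M) * E \<eta> (s/2) \<delta> (Z \<delta> \<kappa>) \<xi>"
      unfolding h_def e_def using CD D by (intro mult_left_mono E_sqrt) (auto simp: M_def)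
    also have "\<dots> \<le> C' * D powr d' * E \<eta> (s/2) \<delta> (Z \<delta> \<kappa>) \<xi>"
    proof (rule mult_right_mono)
      have "D powr d \<le> D powr d'" "D powr (real (n+2) + 1) \<le> D powr d'"
        using D by (auto intro!: powr_mono simp: d'_def)
      then show "2 * C * D powr d + 3 * M \<le> C' * D powr d'"
        using Cds by (simp add: C'_def M_def algebra_simps add_mono mult_left_mono)
    qed (rule less_imp_le[OF E_pos])
    finally show "norm (FT \<Phi> (D/2) (Suc n) \<xi>) \<le> C' * D powr d' * E \<eta> (s/2) \<delta> (Z \<delta> \<kappa>) \<xi>" .
  qed
qed


theorem corollary1:
  fixes \<eta> A a :: real
  assumes "0 < \<eta>" "\<eta> < 1" "A > 0" "a > 0"
  shows "\<forall>n::nat. \<exists>C d s :: real. C > 0 \<and> d > 0 \<and> s > 0 \<and>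
    (\<forall>(D::real) (\<delta>::real) (\<kappa>::nat) (\<Phi>::real \<Rightarrow> complex).
       D \<ge> 2 \<longrightarrow> 0 < \<delta> \<longrightarrow> \<delta> \<le> D \<longrightarrow>
       smooth_real \<Phi> \<longrightarrow>
       (\<forall>x. \<bar>x\<bar> > D / 2 \<longrightarrow> \<Phi> x = 0) \<longrightarrow>
       (LINT x|lborel. (cmod (\<Phi> x))\<^sup>2) = 1 \<longrightarrow>
       (let \<xi>\<^sub>0 = (2 * real \<kappa> + 1) / (4 * \<delta>) in
         (\<forall>\<xi>. cmod (fourier \<Phi> \<xi>) \<le> sqrt \<delta> * A *
              (exp (- a * (\<delta> * \<bar>\<xi> - \<xi>\<^sub>0\<bar>) powr (1 - \<eta>))
               + exp (- a * (\<delta> * \<bar>\<xi> + \<xi>\<^sub>0\<bar>) powr (1 - \<eta>)))) \<longrightarrow>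
         (\<forall>\<xi>. \<bar>\<xi>\<bar> > \<xi>\<^sub>0 \<longrightarrow>
            cmod (vderiv_iter n (fourier \<Phi>) \<xi>) \<le> C * D powr d *
              (exp (- s * (\<delta> * \<bar>\<xi> - \<xi>\<^sub>0\<bar>) powr (1 - \<eta>))
               + exp (- s * (\<delta> * \<bar>\<xi> + \<xi>\<^sub>0\<bar>) powr (1 - \<eta>))))))"
  proof -
  show ?thesis
    unfolding Let_def
  proof (intro allI)
    fix n
    obtain C d s where Cds: "C > 0" "d > 0" "s > 0"
      and B: "\<And>D \<delta> \<kappa> \<Phi> \<xi>. Hyp \<eta> A a D \<delta> \<kappa> \<Phi> \<Longrightarrow> \<bar>\<xi>\<bar> > Z \<delta> \<kappa> \<Longrightarrow>
       norm (FT \<Phi> (D/2) n \<xi>) \<le> C * D powr d * E \<eta> s \<delta> (Z \<delta> \<kappa>) \<xi>"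
      using main[OF assms, of n] by blast
    show "\<exists>C d s :: real. C > 0 \<and> d > 0 \<and> s > 0 \<and>
    (\<forall>(D::real) (\<delta>::real) (\<kappa>::nat) (\<Phi>::real \<Rightarrow> complex).
       D \<ge> 2 \<longrightarrow> 0 < \<delta> \<longrightarrow> \<delta> \<le> D \<longrightarrow>
       smooth_real \<Phi> \<longrightarrow>
       (\<forall>x. \<bar>x\<bar> > D / 2 \<longrightarrow> \<Phi> x = 0) \<longrightarrow>
       (LINT x|lborel. (cmod (\<Phi> x))\<^sup>2) = 1 \<longrightarrow>
         (\<forall>\<xi>. cmod (fourier \<Phi> \<xi>) \<le> sqrt \<delta> * A *
              (exp (- a * (\<delta> * \<bar>\<xi> - (2 * real \<kappa> + 1) / (4 * \<delta>)\<bar>) powr (1 - \<eta>))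
               + exp (- a * (\<delta> * \<bar>\<xi> + (2 * real \<kappa> + 1) / (4 * \<delta>)\<bar>) powr (1 - \<eta>)))) \<longrightarrow>
         (\<forall>\<xi>. \<bar>\<xi>\<bar> > (2 * real \<kappa> + 1) / (4 * \<delta>) \<longrightarrow>
            cmod (vderiv_iter n (fourier \<Phi>) \<xi>) \<le> C * D powr d *
              (exp (- s * (\<delta> * \<bar>\<xi> - (2 * real \<kappa> + 1) / (4 * \<delta>)\<bar>) powr (1 - \<eta>))
               + exp (- s * (\<delta> * \<bar>\<xi> + (2 * real \<kappa> + 1) / (4 * \<delta>)\<bar>) powr (1 - \<eta>)))))"
    proof (intro exI conjI allI impI)
      fix D \<delta> :: real and \<kappa> :: nat and \<Phi> :: "real \<Rightarrow> complex" and \<xi> :: real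
      assume h1: "D \<ge> 2" and h2: "0 < \<delta>" and h3: "\<delta> \<le> D" and h4: "smooth_real \<Phi>"
        and h5: "\<forall>x. \<bar>x\<bar> > D / 2 \<longrightarrow> \<Phi> x = 0" and h6: "(LINT x|lborel. (cmod (\<Phi> x))\<^sup>2) = 1"
        and h7: "\<forall>\<xi>. cmod (fourier \<Phi> \<xi>) \<le> sqrt \<delta> * A *
              (exp (- a * (\<delta> * \<bar>\<xi> - (2 * real \<kappa> + 1) / (4 * \<delta>)\<bar>) powr (1 - \<eta>))
               + exp (- a * (\<delta> * \<bar>\<xi> + (2 * real \<kappa> + 1) / (4 * \<delta>)\<bar>) powr (1 - \<eta>)))"
        and x: "\<bar>\<xi>\<bar> > (2 * real \<kappa> + 1) / (4 * \<delta>)"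
      have H: "Hyp \<eta> A a D \<delta> \<kappa> \<Phi>"
        unfolding Hyp_def E_def Z_def using h1 h2 h3 h4 h5 h6 h7 by blast
      have cont: "continuous_on UNIV \<Phi>" using h4 by (rule smooth_cont)
      have "fourier \<Phi> = FT \<Phi> (D/2) 0"
        using fourier_FT[OF cont, of "D/2"] h5 by auto
      then have "vderiv_iter n (fourier \<Phi>) \<xi> = FT \<Phi> (D/2) n \<xi>"
        using vderiv_FT[OF cont] by simp
      then show "cmod (vderiv_iter n (fourier \<Phi>) \<xi>) \<le> C * D powr d *
              (exp (- s * (\<delta> * \<bar>\<xi> - (2 * real \<kappa> + 1) / (4 * \<delta>)\<bar>) powr (1 - \<eta>))
               + exp (- s * (\<delta> * \<bar>\<xi> + (2 * real \<kappa> + 1) / (4 * \<delta>)\<bar>) powr (1 - \<eta>)))"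
        using B[OF H, of \<xi>] x by (simp add: E_def Z_def)
    qed (use Cds in auto)
  qed
qed

end
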